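(* Let $\alpha>0$ and let $f$ be $2\pi$-periodic and meromorphic in the closed strip $\{s\in\mathbb{C}: |\operatorname{Im} s|\le \alpha\}$, with only one simple pole in this strip, located at $s_0$ with $\operatorname{Im} s_0\neq 0$. Let $r_0$ be the residue of $f$ at $s_0$, and suppose $|f(s)|\le F$ for all $s$ with $|\operatorname{Im} s|=\alpha$. For a positive integer $N$ define the periodic trapezoid rule error $$E_N := \frac{2\pi}{N}\sum_{j=1}^N f(2\pi j/N) - \int_0^{2\pi} f(s)\,ds.$$ Then $$|E_N| \le \frac{2\pi |r_0|}{e^{|\operatorname{Im} s_0| N}-1} + \frac{4\pi F}{e^{\alpha N}-1}.$$ *)

theory Defs
  imports "HOL-Complex_Analysis.Complex_Analysis"
begin

definition strip :: "real \<Rightarrow> complex set" where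
  "strip \<alpha> = {s. \<bar>Im s\<bar> \<le> \<alpha>}"

definition trap_err :: "(complex \<Rightarrow> complex) \<Rightarrow> nat \<Rightarrow> complex" where
  "trap_err f N = (complex_of_real (2 * pi / real N)) * (\<Sum>j=1..N. f (of_real (2 * pi * real j / real N)))
                   - integral {0..2*pi} (\<lambda>t. f (of_real t))"

end

theory Submission imports Defs begin

lemma rect_residue:
  fixes h :: "complex \<Rightarrow> complex"
  assumes U: "open U" "cbox a b \<subseteq> U" and fin: "finite pts" and hol: "h holomorphic_on U - pts"
    and ab: "Re a < Re b" "Im a < Im b" and disj: "pts \<inter> path_image (rectpath a b) = {}"
  shows "contour_integral (rectpath a b) h = 2*pi*\<i> * (\<Sum>p\<in>pts \<inter> box a b. residue h p)"
proof -
  obtain e where e: "e > 0" "(\<Union>x\<in>cbox a b. ball x e) \<subseteq> U"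
    using compact_subset_open_imp_ball_epsilon_subset[OF compact_cbox U(1) U(2)] by blast
  define d where "d = Complex (e/2) (e/2)"
  define S where "S = box (a - d) (b + d)"
  have oS: "open S" and cS: "connected S"
    unfolding S_def by (auto intro: convex_connected)
  have SU: "S \<subseteq> U"
  proof
    fix z assume "z \<in> S"
    hence z: "Re a - e/2 < Re z" "Re z < Re b + e/2" "Im a - e/2 < Im z" "Im z < Im b + e/2"
      by (auto simp: S_def d_def in_box_complex_iff)
    define p where "p = Complex (max (Re a) (min (Re b) (Re z))) (max (Im a) (min (Im b) (Im z)))"
    have p: "p \<in> cbox a b" using ab by (auto simp: p_def in_cbox_complex_iff)
    have r: "\<bar>Re z - Re p\<bar> < e/2" "\<bar>Im z - Im p\<bar> < e/2"
      using z ab e(1) unfolding p_def by (auto simp: abs_if max_def min_def)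
    have "dist p z \<le> \<bar>Re z - Re p\<bar> + \<bar>Im z - Im p\<bar>"
      using cmod_le[of "z - p"] by (simp add: dist_norm norm_minus_commute)
    also have "\<dots> < e" using r by linarith
    finally have "z \<in> ball p e" by simp
    with p e(2) show "z \<in> U" by blast
  qed
  have cbS: "cbox a b \<subseteq> S"
    using e(1) by (auto simp: S_def d_def in_box_complex_iff in_cbox_complex_iff)
  have pi: "path_image (rectpath a b) \<subseteq> cbox a b"
    using ab by (intro path_image_rectpath_subset_cbox) auto
  have "contour_integral (rectpath a b) h = 2 * pi * \<i> *(\<Sum>p\<in>pts. winding_number (rectpath a b) p * residue h p)"
  proof (rule Residue_theorem[OF oS cS fin])
    show "h holomorphic_on S - pts" by (rule holomorphic_on_subset[OF hol]) (use SU in auto)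
    show "path_image (rectpath a b) \<subseteq> S - pts" using pi cbS disj by auto
    show "\<forall>z. z \<notin> S \<longrightarrow> winding_number (rectpath a b) z = 0"
      using cbS ab by (auto intro!: winding_number_rectpath_outside)
  qed auto
  also have "(\<Sum>p\<in>pts. winding_number (rectpath a b) p * residue h p) = (\<Sum>p\<in>pts \<inter> box a b. residue h p)"
  proof (rule sum.mono_neutral_cong_right[OF fin])
    show "\<forall>x\<in>pts - pts \<inter> box a b. winding_number (rectpath a b) x * residue h x = 0"
    proof
      fix x assume x: "x \<in> pts - pts \<inter> box a b"
      hence "x \<notin> cbox a b" using disj path_image_rectpath_cbox_minus_box[of a b] ab by auto
      thus "winding_number (rectpath a b) x * residue h x = 0"
        using ab by (simp add: winding_number_rectpath_outside)
    qed
  qed (auto simp: winding_number_rectpath)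
  finally show ?thesis .
qed

lemma ci_linepath_shift:
  fixes g :: "complex \<Rightarrow> complex"
  assumes "\<And>z. g (z + w) = g z"
  shows "contour_integral (linepath (a + w) (b + w)) g = contour_integral (linepath a b) g"
proof -
  have lp: "linepath (a + w) (b + w) = (+) w \<circ> linepath a b"
    by (auto simp: linepath_def o_def algebra_simps fun_eq_iff scaleR_conv_of_real)
  have g: "(\<lambda>x. g (x + w)) = g" using assms by auto
  have "(g has_contour_integral I) (linepath (a + w) (b + w)) \<longleftrightarrow> (g has_contour_integral I) (linepath a b)" for I
    using has_contour_integral_translate[of g I w "linepath a b"] unfolding lp g .
  thus ?thesis unfolding contour_integral_def contour_integrable_on_def by simp
qed

lemma rectpath_ci:
  fixes g :: "complex \<Rightarrow> complex"
  assumes ab: "Re a < Re b" "Im a < Im b"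
    and cont: "continuous_on (path_image (rectpath a b)) g"
    and per: "\<And>z. g (z + of_real (Re b - Re a)) = g z"
  shows "contour_integral (rectpath a b) g =
     contour_integral (linepath a (Complex (Re b) (Im a))) g - contour_integral (linepath (Complex (Re a) (Im b)) b) g"
proof -
  define a2 a4 where "a2 = Complex (Re b) (Im a)" and "a4 = Complex (Re a) (Im b)"
  have pim: "path_image (rectpath a b) = closed_segment a a2 \<union> closed_segment a2 b \<union> closed_segment b a4 \<union> closed_segment a4 a"
    by (simp add: rectpath_def Let_def path_image_join a2_def a4_def Un_assoc)
  have c1: "continuous_on (closed_segment a a2) g" and c2: "continuous_on (closed_segment a2 b) g"
    and c3: "continuous_on (closed_segment b a4) g" and c4: "continuous_on (closed_segment a4 a) g"
    using cont unfolding pim by (auto elim: continuous_on_subset)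
  note i = c1 c2 c3 c4[THEN contour_integrable_continuous_linepath]
  have "contour_integral (rectpath a b) g = contour_integral (linepath a a2) g + (contour_integral (linepath a2 b) g + (contour_integral (linepath b a4) g + contour_integral (linepath a4 a) g))"
    unfolding rectpath_def Let_def a2_def[symmetric] a4_def[symmetric]
    using c1 c2 c3 c4 by (simp add: contour_integrable_continuous_linepath)
  also have "contour_integral (linepath b a4) g = - contour_integral (linepath a4 b) g"
    using c3 by (rule contour_integral_reverse_linepath)
  also have "contour_integral (linepath a4 a) g = - contour_integral (linepath a a4) g"
    using c4 by (rule contour_integral_reverse_linepath)
  also have "contour_integral (linepath a2 b) g = contour_integral (linepath a a4) g"
  proof -
    have "a2 = a + of_real (Re b - Re a)" "b = a4 + of_real (Re b - Re a)"
      by (simp_all add: a2_def a4_def complex_eq_iff)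
    thus ?thesis using ci_linepath_shift[of g "of_real (Re b - Re a)" a a4] per by simp
  qed
  finally show ?thesis by (simp add: a2_def a4_def)
qed

lemma kb1: fixes u :: complex assumes "norm u > 1" shows "norm (1/(u - 1)) \<le> 1/(norm u - 1)"
proof -
  have "norm u - 1 \<le> norm (u - 1)" using norm_triangle_ineq2[of u 1] by simp
  thus ?thesis using assms by (simp add: norm_divide frac_le)
qed

lemma kb2: fixes u :: complex assumes "norm u < 1" shows "norm (u/(u - 1)) \<le> norm u/(1 - norm u)"
proof -
  have "1 - norm u \<le> norm (u - 1)" using norm_triangle_ineq2[of 1 u] by (simp add: norm_minus_commute)
  thus ?thesis using assms by (simp add: norm_divide frac_le)
qed

lemma expconv: fixes x :: real assumes "x > 0" shows "exp (-x) / (1 - exp (-x)) = 1/(exp x - 1)"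
proof -
  have "exp x > 1" using assms by simp
  thus ?thesis by (simp add: exp_minus field_simps)
qed

lemma combo:
  fixes t S J0 Jm Jp Hm Hp Am Ap rr q1 X a b :: complex
  assumes "t = X * S - J0" "Hm - Hp = X * (rr * q1 + S)" "Hm = (1/2) * Jm + Am" "Hp = -(1/2) * Jp + Ap"
    "Jm = J0 + X * rr * a" "Jp = J0 - X * rr * b"
  shows "t = Am - Ap + X * rr * ((a - b)/2 - q1)"
  using assms by algebra

theorem lemma2p2:
  fixes f :: "complex \<Rightarrow> complex" and \<alpha> F :: real and s0 :: complex and N :: nat
  assumes "\<alpha> > 0"
    and "\<And>s::complex. f (s + 2 * of_real pi) = f s"
    and "f meromorphic_on strip \<alpha>"
    and "f analytic_on (strip \<alpha> - {s0 + of_real (2 * pi * of_int k) | k. True})"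
    and "{z \<in> strip \<alpha>. is_pole f z} = {s0 + of_real (2 * pi * of_int k) | k. True}"
    and "\<bar>Im s0\<bar> \<le> \<alpha>" and "Im s0 \<noteq> 0"
    and "zorder f s0 = -1"
    and "\<And>s. \<bar>Im s\<bar> = \<alpha> \<Longrightarrow> norm (f s) \<le> F"
    and "N > 0"
  shows "norm (trap_err f N)
         \<le> 2 * pi * norm (residue f s0) / (exp (\<bar>Im s0\<bar> * real N) - 1)
           + 4 * pi * F / (exp (\<alpha> * real N) - 1)"
proof -
  define P where "P = {s0 + of_real (2 * pi * of_int k) | k. True}"
  have per1: "f (z + of_real (2*pi)) = f z" for z
    using assms(2)[of z] by simp
  have per_nat: "f (s + of_real (2*pi*real n)) = f s" for s n
  proof (induction n arbitrary: s)
    case 0 show ?case by simp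
  next
    case (Suc n)
    have "s + of_real (2*pi*real (Suc n)) = (s + of_real (2*pi*real n)) + of_real (2*pi)"
      by (simp add: algebra_simps)
    hence "f (s + of_real (2*pi*real (Suc n))) = f (s + of_real (2*pi*real n))" by (simp only: per1)
    also have "\<dots> = f s" by (rule Suc.IH)
    finally show ?case .
  qed
  have per_int: "f (s + of_real (2*pi* of_int k)) = f s" for s k
  proof (cases "k \<ge> 0")
    case True
    then obtain n where "k = int n" by (metis nonneg_int_cases)
    thus ?thesis using per_nat by simp
  next
    case False
    define n where "n = nat (-k)"
    have kn: "of_int k = - real n" using False by (simp add: n_def)
    have "f s = f ((s + of_real (2*pi* of_int k)) + of_real (2*pi*real n))"
      by (simp add: kn algebra_simps)
    thus ?thesis using per_nat by simp
  qed
  have F0: "F \<ge> 0" using assms(9)[of "Complex 0 \<alpha>"] assms(1) by simp (meson norm_ge_zero order_trans)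
  have s0P: "s0 \<in> P" unfolding P_def by (rule CollectI, rule exI[of _ 0]) simp
  have inP: "z \<in> P \<Longrightarrow> \<bar>Im z\<bar> \<le> \<alpha> \<Longrightarrow> is_pole f z" for z
    using assms(5) unfolding P_def[symmetric] by (auto simp: strip_def)
  have ImP: "z \<in> P \<Longrightarrow> Im z = Im s0" for z unfolding P_def by auto
  have pole0: "is_pole f s0" using inP[OF s0P assms(6)] .
  have ImL: "\<bar>Im s0\<bar> < \<alpha>"
  proof (rule ccontr)
    assume "\<not> ?thesis" hence eq: "\<bar>Im s0\<bar> = \<alpha>" using assms(6) by simp
    have "filterlim (\<lambda>x. norm (f x)) at_top (at s0)"
      using pole0 unfolding is_pole_def by (rule filterlim_at_infinity_imp_norm_at_top)
    hence "eventually (\<lambda>x. norm (f x) \<ge> F + 1) (at s0)"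
      by (simp add: filterlim_at_top)
    then obtain d where d: "d > 0" "\<And>x. x \<noteq> s0 \<Longrightarrow> dist x s0 < d \<Longrightarrow> norm (f x) \<ge> F + 1"
      unfolding eventually_at by blast
    define x where "x = s0 + of_real (d/2)"
    have "norm (f x) \<ge> F + 1" using d by (intro d(2)) (auto simp: x_def dist_norm)
    moreover have "norm (f x) \<le> F" using assms(9)[of x] eq by (simp add: x_def)
    ultimately show False by simp
  qed
  have Nr: "real N > 0" using assms(10) by simp
  define c1 where "c1 = - pi / real N"
  define c2 where "c2 = - pi / (2 * real N)"
  define c where "c = (if (\<exists>k::int. Re s0 + 2*pi* of_int k = c1) then c2 else c1)"
  have cN: "- 2*pi/real N < c" "c < 0"
    using Nr pi_gt_zero by (auto simp: c_def c1_def c2_def field_simps)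
  have cne: "Re s0 + 2*pi* of_int k \<noteq> c" for k :: int
  proof
    assume k: "Re s0 + 2*pi* of_int k = c"
    show False
    proof (cases "\<exists>k::int. Re s0 + 2*pi* of_int k = c1")
      case False thus False using k by (auto simp: c_def)
    next
      case True
      then obtain k1 :: int where k1: "Re s0 + 2*pi* of_int k1 = c1" by blast
      from k True have "Re s0 + 2*pi* of_int k = c2" by (simp add: c_def)
      with k1 have eq: "2*pi*(of_int (k - k1)) = c2 - c1" by (simp add: algebra_simps)
      have N1: "real N \<ge> 1" using assms(10) by simp
      have d: "c2 - c1 = pi/(2*real N)" using Nr by (simp add: c1_def c2_def field_simps)
      have "pi/(2*real N) \<le> pi/2" using N1 pi_gt_zero by (intro divide_left_mono) auto
      moreover have "0 < pi/(2*real N)" using Nr pi_gt_zero by simp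
      ultimately have "0 < 2*pi*(of_int (k - k1)::real)" "2*pi*(of_int (k - k1)::real) < 2*pi*1"
        using eq d pi_gt_zero by auto
      hence "0 < (of_int (k - k1)::real)" "(of_int (k - k1)::real) < 1"
        using pi_gt_zero by (simp_all add: zero_less_mult_iff mult_less_cancel_left_pos)
      hence "0 < k - k1" "k - k1 < 1" by linarith+
      thus False by simp
    qed
  qed
  define k0 where "k0 = \<lceil>(c - Re s0) / (2*pi)\<rceil>"
  define s1 where "s1 = s0 + of_real (2*pi* of_int k0)"
  have Res1: "c < Re s1" "Re s1 < c + 2*pi"
  proof -
    have "(c - Re s0) / (2*pi) \<le> of_int k0" "of_int k0 < (c - Re s0) / (2*pi) + 1"
      unfolding k0_def using ceiling_correct[of "(c - Re s0) / (2*pi)"] by linarith+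
    hence "c - Re s0 \<le> 2*pi* of_int k0" "2*pi* of_int k0 < c - Re s0 + 2*pi"
      using pi_gt_zero by (simp_all add: field_simps)
    moreover have "Re s0 + 2*pi* of_int k0 \<noteq> c" by (rule cne)
    ultimately show "c < Re s1" "Re s1 < c + 2*pi" by (auto simp: s1_def)
  qed
  have Ims1: "Im s1 = Im s0" by (simp add: s1_def)
  have s1P: "s1 \<in> P" unfolding P_def s1_def by blast
  have zo1: "zorder f s1 = -1"
  proof -
    have "(\<lambda>u. f (u + s1)) = (\<lambda>u. f (u + s0))"
      by (rule ext) (metis per_int add.assoc add.commute s1_def)
    thus ?thesis using zorder_shift[of f s1] zorder_shift[of f s0] assms(8) by simp
  qed
  have res1: "residue f s1 = residue f s0"
  proof -
    have "(\<lambda>u. f (s1 + u)) = (\<lambda>u. f (s0 + u))"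
      by (rule ext) (metis per_int add.assoc add.commute s1_def)
    thus ?thesis using residue_shift_0[of f s1] residue_shift_0[of f s0] by simp
  qed
  have pole1: "is_pole f s1" using inP[OF s1P] assms(6) Ims1 by simp
  have Pin: "z = s1" if "z \<in> P" "c \<le> Re z" "Re z \<le> c + 2*pi" for z
  proof -
    from that(1) obtain k :: int where z: "z = s0 + of_real (2*pi* of_int k)" unfolding P_def by blast
    have "Re s0 + 2*pi* of_int k \<noteq> c" by (rule cne)
    moreover have "Re s0 + 2*pi* of_int (k - 1) \<noteq> c" by (rule cne)
    ultimately have "c < Re s0 + 2*pi* of_int k" "Re s0 + 2*pi* of_int k < c + 2*pi"
      using that z by (auto simp: algebra_simps)
    with Res1 have "2*pi* of_int (k - k0) < 2*pi*1" "2*pi*(-1) < 2*pi* of_int (k - k0)"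
      by (auto simp: s1_def algebra_simps)
    hence "of_int (k - k0) < (1::real)" "(-1::real) < of_int (k - k0)"
      using pi_gt_zero by (simp_all only: mult_less_cancel_left_pos)
    hence "k = k0" by linarith
    thus ?thesis by (simp add: z s1_def)
  qed
  obtain T where T: "open T" "strip \<alpha> - P \<subseteq> T" "f holomorphic_on T"
    using assms(4) unfolding analytic_on_holomorphic P_def by blast
  define \<rho> where "\<rho> = min (min (Re s1 - c) (c + 2*pi - Re s1)) (\<alpha> - \<bar>Im s0\<bar>)"
  have \<rho>0: "\<rho> > 0" using Res1 ImL by (simp add: \<rho>_def)
  define U where "U = T \<union> ball s1 \<rho>"
  have oU: "open U" using T(1) unfolding U_def by (intro open_Un T(1) open_ball)
  have ballsub: "ball s1 \<rho> - {s1} \<subseteq> T"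
  proof
    fix z assume z: "z \<in> ball s1 \<rho> - {s1}"
    hence "\<bar>Re z - Re s1\<bar> < \<rho>" "\<bar>Im z - Im s1\<bar> < \<rho>"
      using abs_Re_le_cmod[of "z - s1"] abs_Im_le_cmod[of "z - s1"] by (auto simp: dist_norm norm_minus_commute)
    moreover have rb: "\<rho> \<le> Re s1 - c" "\<rho> \<le> c + 2*pi - Re s1" "\<rho> \<le> \<alpha> - \<bar>Im s0\<bar>" by (simp_all add: \<rho>_def)
    moreover have "\<bar>Im z\<bar> \<le> \<bar>Im z - Im s1\<bar> + \<bar>Im s1\<bar>" using abs_triangle_ineq[of "Im z - Im s1" "Im s1"] by simp
    ultimately have "c < Re z" "Re z < c + 2*pi" "\<bar>Im z\<bar> < \<alpha>" using Ims1 by (auto simp: abs_less_iff)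
    hence "z \<in> strip \<alpha>" "z \<notin> P" using Pin z by (auto simp: strip_def)
    thus "z \<in> T" using T(2) by blast
  qed
  have holU: "f holomorphic_on U - {s1}"
    by (rule holomorphic_on_subset[OF T(3)]) (use ballsub in \<open>auto simp: U_def\<close>)
  define a where "a = Complex c (-\<alpha>)"
  define b where "b = Complex (c + 2*pi) \<alpha>"
  have cboxU: "cbox a b \<subseteq> U"
  proof
    fix z assume "z \<in> cbox a b"
    hence z: "c \<le> Re z" "Re z \<le> c + 2*pi" "\<bar>Im z\<bar> \<le> \<alpha>" by (auto simp: a_def b_def in_cbox_complex_iff)
    show "z \<in> U"
    proof (cases "z \<in> P")
      case True thus ?thesis using Pin z \<rho>0 by (auto simp: U_def)
    next
      case False thus ?thesis using T(2) z by (auto simp: U_def strip_def)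
    qed
  qed
  have s1U: "s1 \<in> U" using \<rho>0 by (simp add: U_def)
  define J where "J = (\<lambda>y g. contour_integral (linepath (Complex c y) (Complex (c+2*pi) y)) g)"
  have segT: "closed_segment (Complex c y) (Complex (c+2*pi) y) \<subseteq> T" if "\<bar>y\<bar> \<le> \<alpha>" "y \<noteq> Im s0" for y
  proof
    fix z assume "z \<in> closed_segment (Complex c y) (Complex (c+2*pi) y)"
    hence "Im z = y" by (simp add: closed_segment_same_Im)
    thus "z \<in> T" using that ImP T(2) by (auto simp: strip_def)
  qed
  have fcont_seg: "continuous_on (closed_segment (Complex c y) (Complex (c+2*pi) y)) f" if "\<bar>y\<bar> \<le> \<alpha>" "y \<noteq> Im s0" for y
    using holomorphic_on_imp_continuous_on[OF holomorphic_on_subset[OF T(3) segT[OF that]]] .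

  have Rc: "continuous_on (closed_segment x y) f" if "Im x = 0" "Im y = 0" for x y
  proof -
    have "closed_segment x y \<subseteq> T"
    proof
      fix z assume "z \<in> closed_segment x y"
      hence "Im z = 0" using that by (simp add: closed_segment_same_Im)
      thus "z \<in> T" using T(2) ImP assms(1,7) by (auto simp: strip_def)
    qed
    thus ?thesis by (rule holomorphic_on_imp_continuous_on[OF holomorphic_on_subset[OF T(3)]])
  qed
  have c2pi: "0 \<le> c + 2*pi"
  proof -
    have "- 2*pi/real N \<ge> - 2*pi" using assms(10) pi_gt_zero by (simp add: field_simps)
    thus ?thesis using cN(1) by linarith
  qed
  have Jreal: "J 0 f = integral {0..2*pi} (\<lambda>t. f (of_real t))"
  proof -
    have cm: "0 \<in> closed_segment (complex_of_real c) (of_real (c + 2*pi))"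
    proof -
      have "0 \<in> closed_segment c (c + 2*pi)" using cN c2pi pi_gt_zero by (simp add: closed_segment_eq_real_ivl)
      thus ?thesis by (simp add: closed_segment_same_Im)
    qed
    have cm2: "complex_of_real (c + 2*pi) \<in> closed_segment 0 (of_real (2*pi))"
    proof -
      have "c + 2*pi \<in> closed_segment 0 (2*pi)" using cN c2pi by (simp add: closed_segment_eq_real_ivl)
      thus ?thesis by (simp add: closed_segment_same_Im)
    qed
    have Cc: "Complex x 0 = of_real x" for x by (simp add: complex_eq_iff)
    have I1: "J 0 f = contour_integral (linepath (of_real c) 0) f + contour_integral (linepath 0 (of_real (c + 2*pi))) f"
      unfolding J_def Cc by (rule contour_integral_split_linepath[OF Rc cm]) simp_all
    have e: "complex_of_real c + of_real (2*pi) = of_real (c+2*pi)" "0 + complex_of_real (2*pi) = of_real (2*pi)" by simp_all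
    have I2: "contour_integral (linepath (of_real (c+2*pi)) (of_real (2*pi))) f = contour_integral (linepath (of_real c) 0) f"
      using ci_linepath_shift[of f "of_real (2*pi)" "of_real c" 0, OF per1] unfolding e .
    have I3: "contour_integral (linepath 0 (of_real (2*pi))) f = contour_integral (linepath 0 (of_real (c + 2*pi))) f + contour_integral (linepath (of_real (c+2*pi)) (of_real (2*pi))) f"
      by (rule contour_integral_split_linepath[OF Rc cm2]) simp_all
    have I4: "contour_integral (linepath 0 (of_real (2*pi))) f = integral {0..2*pi} (\<lambda>t. f (of_real t))"
      using contour_integral_linepath_Reals_eq[of 0 "of_real (2*pi)" f] by simp
    show ?thesis using I1 I2 I3 I4 by (simp add: add.commute)
  qed
  have contf: "continuous_on S f" if "S \<subseteq> U - {s1}" for S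
    using holomorphic_on_imp_continuous_on[OF holomorphic_on_subset[OF holU that]] .
  have per1': "\<And>z. f (z + of_real (c + 2 * pi - c)) = f z" using per1 by simp
  define am where "am = Complex (c + 2*pi) 0"
  have s1nA: "s1 \<notin> path_image (rectpath a am)"
    using Res1 ImL Ims1 assms(1,7) by (subst path_image_rectpath) (auto simp: a_def am_def)
  have cbA: "cbox a am \<subseteq> cbox a b" using assms(1) by (auto simp: a_def am_def b_def in_cbox_complex_iff)
  have A1: "contour_integral (rectpath a am) f = 2*pi*\<i> * (\<Sum>p\<in>{s1} \<inter> box a am. residue f p)"
    by (rule rect_residue[OF oU _ _ holU]) (use cbA cboxU s1nA assms(1) in \<open>auto simp: a_def am_def\<close>)
  have A2: "contour_integral (rectpath a am) f = J (-\<alpha>) f - J 0 f"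
  proof -
    have "path_image (rectpath a am) \<subseteq> U - {s1}"
      using path_image_rectpath_subset_cbox[of a am] cbA cboxU s1nA assms(1) by (auto simp: a_def am_def)
    hence "contour_integral (rectpath a am) f =
     contour_integral (linepath a (Complex (Re am) (Im a))) f - contour_integral (linepath (Complex (Re a) (Im am)) am) f"
      using assms(1) per1' by (intro rectpath_ci contf) (auto simp: a_def am_def)
    thus ?thesis by (simp add: J_def a_def am_def)
  qed
  have A3: "(\<Sum>p\<in>{s1} \<inter> box a am. residue f p) = (if Im s0 < 0 then residue f s0 else 0)"
  proof (cases "Im s0 < 0")
    case True
    hence "{s1} \<inter> box a am = {s1}" using Res1 ImL Ims1 by (auto simp: a_def am_def in_box_complex_iff)
    thus ?thesis using True res1 by simp
  next
    case False
    hence "{s1} \<inter> box a am = {}" using Ims1 by (auto simp: a_def am_def in_box_complex_iff)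
    thus ?thesis using False by simp
  qed
  define ap where "ap = Complex c 0"
  have s1nB: "s1 \<notin> path_image (rectpath ap b)"
    using Res1 ImL Ims1 assms(1,7) by (subst path_image_rectpath) (auto simp: ap_def b_def)
  have cbB: "cbox ap b \<subseteq> cbox a b" using assms(1) by (auto simp: a_def ap_def b_def in_cbox_complex_iff)
  have B1: "contour_integral (rectpath ap b) f = 2*pi*\<i> * (\<Sum>p\<in>{s1} \<inter> box ap b. residue f p)"
    by (rule rect_residue[OF oU _ _ holU]) (use cbB cboxU s1nB assms(1) in \<open>auto simp: ap_def b_def\<close>)
  have B2: "contour_integral (rectpath ap b) f = J 0 f - J \<alpha> f"
  proof -
    have "path_image (rectpath ap b) \<subseteq> U - {s1}"
      using path_image_rectpath_subset_cbox[of ap b] cbB cboxU s1nB assms(1) by (auto simp: ap_def b_def)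
    hence "contour_integral (rectpath ap b) f =
     contour_integral (linepath ap (Complex (Re b) (Im ap))) f - contour_integral (linepath (Complex (Re ap) (Im b)) b) f"
      using assms(1) per1' by (intro rectpath_ci contf) (auto simp: ap_def b_def)
    thus ?thesis by (simp add: J_def ap_def b_def)
  qed
  have B3: "(\<Sum>p\<in>{s1} \<inter> box ap b. residue f p) = (if Im s0 > 0 then residue f s0 else 0)"
  proof (cases "Im s0 > 0")
    case True
    hence "{s1} \<inter> box ap b = {s1}" using Res1 ImL Ims1 by (auto simp: ap_def b_def in_box_complex_iff)
    thus ?thesis using True res1 by simp
  next
    case False
    hence "{s1} \<inter> box ap b = {}" using Ims1 by (auto simp: ap_def b_def in_box_complex_iff)
    thus ?thesis using False by simp
  qed
  have eqA: "J (-\<alpha>) f - J 0 f = 2*pi*\<i> * (if Im s0 < 0 then residue f s0 else 0)"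
    using A1 A2 A3 by simp
  have eqB: "J 0 f - J \<alpha> f = 2*pi*\<i> * (if Im s0 > 0 then residue f s0 else 0)"
    using B1 B2 B3 by simp
  define u where "u = (\<lambda>z. exp (\<i> * of_nat N * z))"
  define q where "q = (\<lambda>z. (u z + 1) / (2 * (u z - 1)))"
  define h where "h = (\<lambda>z. f z * q z)"
  have NC: "(of_nat N :: complex) \<noteq> 0" using assms(10) by simp
  have normu: "norm (u z) = exp (- (real N * Im z))" for z by (simp add: u_def)
  have u1: "\<exists>m::int. z = of_real (2*pi* of_int m / real N)" if uz1: "u z = 1" for z
  proof -
    obtain n::int where n: "Re (\<i> * of_nat N * z) = 0" "Im (\<i> * of_nat N * z) = of_int (2*n) * pi"
      using uz1 unfolding u_def exp_eq_1 by blast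
    hence "Im z = 0" "real N * Re z = 2 * of_int n * pi" using Nr by auto
    hence "z = of_real (2*pi* of_int n / real N)" using Nr by (simp add: complex_eq_iff field_simps)
    thus ?thesis by blast
  qed
  have unz2: "u w \<noteq> 1" if "Im w \<noteq> 0" for w
  proof
    assume "u w = 1"
    hence "exp (- (real N * Im w)) = 1" using normu[of w] by simp
    hence "real N * Im w = 0" by simp
    thus False using that Nr by simp
  qed
  have uper: "u (z + of_real (2*pi)) = u z" for z
  proof -
    have "\<i> * of_nat N * (z + of_real (2*pi)) = \<i> * of_nat N * z + \<i> * (of_int (int N) * (of_real pi * 2))"
      by (simp add: algebra_simps)
    thus ?thesis by (simp only: u_def exp_plus_2pin)
  qed
  have hper: "h (z + of_real (2*pi)) = h z" for z using per1 uper by (simp add: h_def q_def)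
  have qalt1: "q z = 1/2 + 1/(u z - 1)" if "u z \<noteq> 1" for z
    using that by (simp add: q_def field_simps)
  have qalt2: "q z = -1/2 + u z/(u z - 1)" if "u z \<noteq> 1" for z
    using that by (simp add: q_def field_simps)
  define \<epsilon> where "\<epsilon> = min (c + 2*pi/real N) (-c)"
  have \<epsilon>0: "\<epsilon> > 0" using cN by (simp add: \<epsilon>_def)
  define Uq where "Uq = U \<inter> {z. c - \<epsilon> < Re z \<and> Re z < c + 2*pi + \<epsilon>}"
  have oUq: "open Uq" unfolding Uq_def
    by (intro open_Int oU open_Collect_conj open_Collect_less continuous_intros)
  define nd where "nd = (\<lambda>j::nat. complex_of_real (2*pi*real j/real N))"
  define Z where "Z = nd ` {..<N}"
  define pts where "pts = insert s1 Z"
  have cNN: "c * real N > - 2*pi" using cN(1) Nr by (simp add: field_simps)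
  have ndRe: "0 \<le> Re (nd j)" "Im (nd j) = 0" for j using Nr by (simp_all add: nd_def)
  have ndRe2: "Re (nd j) < c + 2*pi" if "j < N" for j
  proof -
    have "real (Suc j) \<le> real N" using that by (simp only: of_nat_le_iff Suc_le_eq)
    hence "real j + 1 \<le> real N" by simp
    hence "2*pi*(real j + 1) \<le> 2*pi*real N" using pi_gt_zero by (intro mult_left_mono) auto
    hence "2*pi*real j < (c + 2*pi)*real N" using cNN by (simp add: algebra_simps)
    thus ?thesis using Nr by (simp add: nd_def divide_less_eq)
  qed
  have inj_nd: "inj_on nd {..<N}"
    using Nr by (auto simp: inj_on_def nd_def)
  have s1Z: "s1 \<notin> Z" using Ims1 assms(7) ndRe(2) by (auto simp: Z_def)
  have finpts: "finite pts" by (simp add: pts_def Z_def)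
  have unz: "u z \<noteq> 1" if "z \<in> Uq - pts" for z
  proof
    assume "u z = 1"
    then obtain m :: int where m: "z = of_real (2*pi* of_int m / real N)" using u1 by blast
    have "c - \<epsilon> < Re z" "Re z < c + 2*pi + \<epsilon>" using that by (auto simp: Uq_def)
    moreover have "c - \<epsilon> \<ge> - 2*pi/real N" "c + \<epsilon> \<le> 0" by (auto simp: \<epsilon>_def)
    ultimately have "- 2*pi/real N < 2*pi* of_int m / real N" "2*pi* of_int m / real N < 2*pi"
      by (auto simp: m)
    hence "- 2*pi < 2*pi* of_int m" "2*pi* of_int m < 2*pi*real N"
      using Nr by (simp_all add: divide_less_eq less_divide_eq)
    hence "2*pi*(-1) < 2*pi* of_int m" "2*pi* of_int m < 2*pi*real N" by simp_all
    hence "(-1::real) < of_int m" "of_int m < real N" using pi_gt_zero by (simp_all only: mult_less_cancel_left_pos)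
    hence "0 \<le> m" "m < int N" by linarith+
    hence "z = nd (nat m)" "nat m < N" by (auto simp: m nd_def)
    hence "z \<in> pts" by (auto simp: pts_def Z_def)
    thus False using that by simp
  qed
  have holf_q: "f holomorphic_on Uq - pts"
    by (rule holomorphic_on_subset[OF holU]) (auto simp: Uq_def pts_def)
  have holq: "q holomorphic_on Uq - pts"
    unfolding q_def u_def by (intro holomorphic_intros) (use unz in \<open>auto simp: u_def\<close>)
  have holh: "h holomorphic_on Uq - pts"
    unfolding h_def by (intro holomorphic_on_mult holf_q holq)
  have cboxUq: "cbox a b \<subseteq> Uq"
    using cboxU \<epsilon>0 by (auto simp: Uq_def a_def b_def in_cbox_complex_iff)
  have s1box: "s1 \<in> box a b" using Res1 ImL Ims1 by (auto simp: a_def b_def in_box_complex_iff)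
  have ndbox: "nd j \<in> box a b" if "j < N" for j
    using ndRe[of j] ndRe2[OF that] cN assms(1) by (auto simp: a_def b_def in_box_complex_iff)
  have ptsbox: "pts \<subseteq> box a b" using s1box ndbox by (auto simp: pts_def Z_def)
  have ptsdisj: "pts \<inter> path_image (rectpath a b) = {}"
    using ptsbox path_image_rectpath_inter_box[of a b] assms(1) by (auto simp: a_def b_def)
  have C1: "contour_integral (rectpath a b) h = 2*pi*\<i> * (\<Sum>p\<in>pts \<inter> box a b. residue h p)"
    by (rule rect_residue[OF oUq cboxUq finpts holh]) (use ptsdisj assms(1) in \<open>auto simp: a_def b_def\<close>)
  have C2: "contour_integral (rectpath a b) h = J (-\<alpha>) h - J \<alpha> h"
  proof -
    have "path_image (rectpath a b) \<subseteq> Uq - pts"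
      using path_image_rectpath_subset_cbox[of a b] cboxUq ptsdisj assms(1) by (auto simp: a_def b_def)
    hence ct: "continuous_on (path_image (rectpath a b)) h"
      using holomorphic_on_imp_continuous_on[OF holomorphic_on_subset[OF holh]] by blast
    have "contour_integral (rectpath a b) h =
     contour_integral (linepath a (Complex (Re b) (Im a))) h - contour_integral (linepath (Complex (Re a) (Im b)) b) h"
      using assms(1) hper ct by (intro rectpath_ci) (auto simp: a_def b_def)
    thus ?thesis by (simp add: J_def a_def b_def)
  qed
  have C3: "(\<Sum>p\<in>pts \<inter> box a b. residue h p) = residue h s1 + (\<Sum>j<N. residue h (nd j))"
  proof -
    have "pts \<inter> box a b = insert s1 Z" using ptsbox by (auto simp: pts_def)
    hence "(\<Sum>p\<in>pts \<inter> box a b. residue h p) = residue h s1 + (\<Sum>p\<in>Z. residue h p)"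
      using s1Z by (simp add: Z_def)
    also have "(\<Sum>p\<in>Z. residue h p) = (\<Sum>j<N. residue h (nd j))"
      unfolding Z_def by (simp add: sum.reindex[OF inj_nd])
    finally show ?thesis .
  qed
  have openU1: "open (U - {s1})" using oU by auto
  have fcontat: "isCont f z" if "z \<in> U - {s1}" for z
    using holomorphic_on_imp_continuous_on[OF holU] openU1 that
    by (simp add: continuous_on_eq_continuous_at)
  have RN: "residue h (nd j) = f (nd j) / (\<i> * of_nat N)" if j: "j < N" for j
  proof -
    define z where "z = nd j"
    have zUq: "z \<in> Uq" using ndbox[OF j] cboxUq box_subset_cbox by (auto simp: z_def)
    have zpts: "z \<in> pts" using j by (auto simp: z_def pts_def Z_def)
    have zU1: "z \<in> U - {s1}" using zUq zpts s1Z j by (auto simp: Uq_def z_def pts_def Z_def)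
    have oS: "open (Uq - (pts - {z}))" using oUq finpts by (intro open_Diff finite_imp_closed) auto
    have uz: "u z = 1"
    proof -
      have "\<i> * of_nat N * z = \<i> * (of_int (int j) * (of_real pi * 2))"
        using NC by (simp add: z_def nd_def field_simps)
      thus ?thesis by (simp only: u_def exp_2pi_1_int)
    qed
    have du: "(u has_field_derivative \<i> * of_nat N * u z) (at z)"
      unfolding u_def by (auto intro!: derivative_eq_intros)
    hence "((\<lambda>w. (u w - u z) / (w - z)) \<longlongrightarrow> \<i> * of_nat N) (at z)"
      using uz by (simp add: has_field_derivative_iff)
    hence l1: "((\<lambda>w. inverse ((u w - u z) / (w - z))) \<longlongrightarrow> inverse (\<i> * of_nat N)) (at z)"
      using NC by (intro tendsto_inverse) auto
    have cu: "isCont u z" unfolding u_def by (intro continuous_intros)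
    have "isCont (\<lambda>w. (u w + 1) / 2) z" unfolding u_def by (intro continuous_intros) auto
    hence l2: "((\<lambda>w. (u w + 1) / 2) \<longlongrightarrow> (u z + 1)/2) (at z)" by (simp add: isCont_def)
    have l3: "(f \<longlongrightarrow> f z) (at z)" using fcontat[OF zU1] by (simp add: isCont_def)
    have lim: "((\<lambda>w. f w * ((u w + 1) / 2) * inverse ((u w - u z) / (w - z))) \<longlongrightarrow> f z / (\<i> * of_nat N)) (at z)"
    proof -
      have val: "f z * ((u z + 1)/2) * inverse (\<i> * of_nat N) = f z / (\<i> * of_nat N)"
        by (simp add: uz divide_inverse)
      show ?thesis using tendsto_mult[OF tendsto_mult[OF l3 l2] l1] unfolding val .
    qed
    have eq: "f w * ((u w + 1) / 2) * inverse ((u w - u z) / (w - z)) = h w * (w - z)" for w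
    proof -
      have "inverse ((u w - u z) / (w - z)) = (w - z) / (u w - 1)" by (simp add: uz inverse_divide)
      thus ?thesis by (auto simp add: h_def q_def times_divide_times_eq times_divide_eq_left mult_ac)
    qed
    have lim': "((\<lambda>w. h w * (w - z)) \<longlongrightarrow> f z / (\<i> * of_nat N)) (at z)"
      using lim unfolding eq .
    have "residue h z = f z / (\<i> * of_nat N)"
      by (rule residue_simple'[OF oS _ _ lim']) (use zUq zpts holh in \<open>auto intro: holomorphic_on_subset\<close>)
    thus ?thesis by (simp add: z_def)
  qed
  obtain r where r: "r > 0" "cball s1 r \<subseteq> U" "zor_poly f s1 holomorphic_on cball s1 r"
      "\<forall>w\<in>cball s1 r - {s1}. f w = zor_poly f s1 w / (w - s1)"
    using zorder_exist_pole[OF holU oU s1U pole1] zo1 by auto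
  define g where "g = zor_poly f s1"
  have gcont: "isCont g s1"
  proof -
    have "continuous_on (ball s1 r) g"
      using holomorphic_on_imp_continuous_on[OF holomorphic_on_subset[OF r(3)]] by (auto simp: g_def)
    thus ?thesis using r(1) by (simp add: continuous_on_eq_continuous_at)
  qed
  have ev: "eventually (\<lambda>w. g w = f w * (w - s1)) (at s1)"
    unfolding eventually_at using r(1,4)
    by (intro exI[of _ r]) (auto simp: g_def dist_commute)
  have Rf: "residue f s1 = g s1"
  proof (rule residue_simple'[of "ball s1 r"])
    show "f holomorphic_on ball s1 r - {s1}"
      by (rule holomorphic_on_subset[OF holU]) (use r(2) in auto)
    show "((\<lambda>w. f w * (w - s1)) \<longlongrightarrow> g s1) (at s1)"
      using Lim_transform_eventually[OF _ ev] gcont by (simp add: isCont_def)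
  qed (use r in auto)
  have us1: "u s1 \<noteq> 1" using unz2 Ims1 assms(7) by simp
  define r' where "r' = min r \<bar>Im s1\<bar>"
  have r'0: "r' > 0" using r(1) Ims1 assms(7) by (simp add: r'_def)
  have qcont: "isCont q s1" unfolding q_def u_def
    by (intro continuous_intros) (use us1 in \<open>simp add: u_def\<close>)
  have Rh: "residue h s1 = g s1 * q s1"
  proof (rule residue_simple'[of "ball s1 r'"])
    have "ball s1 r' \<subseteq> {w. Im w \<noteq> 0}"
    proof
      fix w assume "w \<in> ball s1 r'"
      hence "\<bar>Im w - Im s1\<bar> < \<bar>Im s1\<bar>"
        using abs_Im_le_cmod[of "w - s1"] by (auto simp: r'_def dist_norm norm_minus_commute)
      thus "w \<in> {w. Im w \<noteq> 0}" by auto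
    qed
    hence hq: "q holomorphic_on ball s1 r'"
      unfolding q_def u_def by (intro holomorphic_intros) (use unz2 in \<open>auto simp: u_def\<close>)
    have hf: "f holomorphic_on ball s1 r' - {s1}"
      by (rule holomorphic_on_subset[OF holU]) (use r(2) in \<open>auto simp: r'_def\<close>)
    show "h holomorphic_on ball s1 r' - {s1}"
      unfolding h_def by (intro holomorphic_on_mult hf holomorphic_on_subset[OF hq]) auto
    have "((\<lambda>w. g w * q w) \<longlongrightarrow> g s1 * q s1) (at s1)"
      using gcont qcont by (intro tendsto_intros) (simp_all add: isCont_def)
    moreover have "eventually (\<lambda>w. g w * q w = h w * (w - s1)) (at s1)"
      using ev by eventually_elim (simp add: h_def)
    ultimately show "((\<lambda>w. h w * (w - s1)) \<longlongrightarrow> g s1 * q s1) (at s1)"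
      by (rule Lim_transform_eventually)
  qed (use r'0 in auto)
  define rr where "rr = residue f s0"
  define q1 where "q1 = q s1"
  define S where "S = (\<Sum>j<N. f (nd j) / (\<i> * of_nat N))"
  have eqC: "J (-\<alpha>) h - J \<alpha> h = 2*pi*\<i> * (rr * q1 + S)"
  proof -
    have "(\<Sum>j<N. residue h (nd j)) = S" unfolding S_def by (intro sum.cong refl) (simp add: RN)
    thus ?thesis using C1 C2 C3 Rh Rf res1 by (simp add: rr_def q1_def)
  qed
  define e1 where "e1 = (\<lambda>z. 1 / (u z - 1))"
  define e2 where "e2 = (\<lambda>z. u z / (u z - 1))"
  have segIm: "Im z = y" if "z \<in> closed_segment (Complex c y) (Complex (c+2*pi) y)" for z y
    using that by (simp add: closed_segment_same_Im)
  have normu_m: "norm (u z) = exp (\<alpha> * real N)" if "Im z = - \<alpha>" for z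
    using that by (simp add: normu mult.commute)
  have normu_p: "norm (u z) = exp (- (\<alpha> * real N))" if "Im z = \<alpha>" for z
    using that by (simp add: normu mult.commute)
  have Egt: "exp (\<alpha> * real N) > 1" using assms(1) Nr by simp
  have Elt: "exp (- (\<alpha> * real N)) < 1" using assms(1) Nr by simp
  have unzm: "u z \<noteq> 1" if "Im z = - \<alpha>" for z using normu_m[OF that] Egt by auto
  have unzp: "u z \<noteq> 1" if "Im z = \<alpha>" for z using normu_p[OF that] Elt by auto
  have fcm: "continuous_on (closed_segment (Complex c (-\<alpha>)) (Complex (c+2*pi) (-\<alpha>))) f"
    using fcont_seg[of "-\<alpha>"] ImL by simp
  have fcp: "continuous_on (closed_segment (Complex c \<alpha>) (Complex (c+2*pi) \<alpha>)) f"
    using fcont_seg[of "\<alpha>"] ImL by simp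
  have e1c: "continuous_on (closed_segment (Complex c (-\<alpha>)) (Complex (c+2*pi) (-\<alpha>))) (\<lambda>z. f z * e1 z)"
    unfolding e1_def u_def using fcm unzm segIm
    by (intro continuous_intros) (auto simp: u_def)
  have e2c: "continuous_on (closed_segment (Complex c \<alpha>) (Complex (c+2*pi) \<alpha>)) (\<lambda>z. f z * e2 z)"
    unfolding e2_def u_def using fcp unzp segIm
    by (intro continuous_intros) (auto simp: u_def)
  define Am where "Am = J (-\<alpha>) (\<lambda>z. f z * e1 z)"
  define Ap where "Ap = J \<alpha> (\<lambda>z. f z * e2 z)"
  have hm: "J (-\<alpha>) h = (1/2) * J (-\<alpha>) f + Am"
  proof -
    have "J (-\<alpha>) h = J (-\<alpha>) (\<lambda>z. (1/2) * f z + f z * e1 z)"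
      unfolding J_def
      by (intro contour_integral_eq) (use segIm unzm in \<open>auto simp: h_def qalt1 e1_def algebra_simps\<close>)
    also have "\<dots> = (1/2) * J (-\<alpha>) f + Am"
    proof -
      note i1 = contour_integrable_continuous_linepath[OF fcm]
      note i2 = contour_integrable_continuous_linepath[OF e1c]
      show ?thesis unfolding J_def Am_def
        by (simp only: contour_integral_add[OF contour_integrable_lmul[OF i1] i2] contour_integral_lmul[OF i1])
    qed
    finally show ?thesis .
  qed
  have hp: "J \<alpha> h = -(1/2) * J \<alpha> f + Ap"
  proof -
    have "J \<alpha> h = J \<alpha> (\<lambda>z. -(1/2) * f z + f z * e2 z)"
      unfolding J_def
      by (intro contour_integral_eq) (use segIm unzp in \<open>auto simp: h_def qalt2 e2_def algebra_simps\<close>)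
    also have "\<dots> = -(1/2) * J \<alpha> f + Ap"
    proof -
      note i1 = contour_integrable_continuous_linepath[OF fcp]
      note i2 = contour_integrable_continuous_linepath[OF e2c]
      show ?thesis unfolding J_def Ap_def
        by (simp only: contour_integral_add[OF contour_integrable_lmul[OF i1] i2] contour_integral_lmul[OF i1])
    qed
    finally show ?thesis .
  qed
  have len: "norm (Complex (c+2*pi) y - Complex c y) = 2*pi" for y
  proof -
    have "Complex (c+2*pi) y - Complex c y = of_real (2*pi)" by (simp add: complex_eq_iff)
    thus ?thesis by simp
  qed
  define B where "B = F / (exp (\<alpha> * real N) - 1)"
  have B0: "B \<ge> 0" using F0 Egt by (simp add: B_def)
  have bAm: "norm Am \<le> B * (2*pi)"
  proof -
    have "norm Am \<le> B * norm (Complex (c+2*pi) (-\<alpha>) - Complex c (-\<alpha>))"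
      unfolding Am_def J_def
    proof (rule contour_integral_bound_linepath[OF contour_integrable_continuous_linepath[OF e1c] B0])
      fix x assume x: "x \<in> closed_segment (Complex c (-\<alpha>)) (Complex (c+2*pi) (-\<alpha>))"
      hence Ix: "Im x = - \<alpha>" by (rule segIm)
      have "norm (f x) \<le> F" using assms(9)[of x] Ix assms(1) by simp
      moreover have "norm (e1 x) \<le> 1 / (exp (\<alpha> * real N) - 1)"
        using kb1[of "u x"] normu_m[OF Ix] Egt by (simp add: e1_def)
      ultimately have "norm (f x) * norm (e1 x) \<le> F * (1 / (exp (\<alpha> * real N) - 1))"
        by (intro mult_mono) (use F0 in auto)
      thus "norm (f x * e1 x) \<le> B" by (simp add: B_def norm_mult)
    qed
    thus ?thesis by (simp add: len)
  qed
  have bAp: "norm Ap \<le> B * (2*pi)"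
  proof -
    have "norm Ap \<le> B * norm (Complex (c+2*pi) \<alpha> - Complex c \<alpha>)"
      unfolding Ap_def J_def
    proof (rule contour_integral_bound_linepath[OF contour_integrable_continuous_linepath[OF e2c] B0])
      fix x assume x: "x \<in> closed_segment (Complex c \<alpha>) (Complex (c+2*pi) \<alpha>)"
      hence Ix: "Im x = \<alpha>" by (rule segIm)
      have "norm (f x) \<le> F" using assms(9)[of x] Ix assms(1) by simp
      moreover have "norm (e2 x) \<le> 1 / (exp (\<alpha> * real N) - 1)"
        using kb2[of "u x"] normu_p[OF Ix] Elt expconv[of "\<alpha> * real N"] assms(1) Nr by (simp add: e2_def)
      ultimately have "norm (f x) * norm (e2 x) \<le> F * (1 / (exp (\<alpha> * real N) - 1))"
        by (intro mult_mono) (use F0 in auto)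
      thus "norm (f x * e2 x) \<le> B" by (simp add: B_def norm_mult)
    qed
    thus ?thesis by (simp add: len)
  qed
  have sumshift: "(\<Sum>j=1..N. f (nd j)) = (\<Sum>j<N. f (nd j))"
  proof -
    have gN: "f (nd N) = f (nd 0)"
      using per1[of 0] NC by (simp add: nd_def)
    have s1: "(\<Sum>j=0..N. f (nd j)) = f (nd 0) + (\<Sum>j=1..N. f (nd j))"
      by (simp add: sum.atLeast_Suc_atMost)
    have s2: "(\<Sum>j=0..N. f (nd j)) = (\<Sum>j<N. f (nd j)) + f (nd N)"
      by (simp only: atLeast0AtMost lessThan_Suc_atMost[symmetric] sum.lessThan_Suc)
    show ?thesis using s1 s2 gN by simp
  qed
  have TS: "complex_of_real (2 * pi / real N) * (\<Sum>j=1..N. f (of_real (2 * pi * real j / real N))) = 2*pi*\<i> * S"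
  proof -
    have "(\<Sum>j=1..N. f (of_real (2 * pi * real j / real N))) = (\<Sum>j<N. f (nd j))"
      using sumshift by (simp add: nd_def)
    moreover have "2*pi*\<i> * S = (2*pi*\<i>/(\<i> * of_nat N)) * (\<Sum>j<N. f (nd j))"
      unfolding S_def by (simp add: sum_divide_distrib[symmetric] field_simps)
    moreover have "2*pi*\<i>/(\<i> * of_nat N) = complex_of_real (2 * pi / real N)"
      using NC by (simp add: field_simps)
    ultimately show ?thesis by simp
  qed
  define K where "K = (if Im s0 < 0 then 1/2 else -1/2) - q1"
  have E: "trap_err f N = Am - Ap + 2*pi*\<i> * rr * K"
  proof -
    have t: "trap_err f N = 2*pi*\<i> * S - J 0 f"
      unfolding trap_err_def TS Jreal ..
    show ?thesis
    proof (cases "Im s0 < 0")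
      case True
      hence "J (-\<alpha>) f = J 0 f + (2*pi*\<i>) * rr * 1" "J \<alpha> f = J 0 f - (2*pi*\<i>) * rr * 0"
        using eqA eqB by (simp_all add: rr_def algebra_simps)
      from combo[OF t eqC hm hp this] show ?thesis using True by (simp add: K_def)
    next
      case False
      hence "Im s0 > 0" using assms(7) by simp
      hence "J (-\<alpha>) f = J 0 f + (2*pi*\<i>) * rr * 0" "J \<alpha> f = J 0 f - (2*pi*\<i>) * rr * 1"
        using eqA eqB by (simp_all add: rr_def algebra_simps)
      from combo[OF t eqC hm hp this] show ?thesis using False by (simp add: K_def)
    qed
  qed
  have xs: "\<bar>Im s0\<bar> * real N > 0" using assms(7) Nr by simp
  have bK: "norm K \<le> 1 / (exp (\<bar>Im s0\<bar> * real N) - 1)"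
  proof (cases "Im s0 < 0")
    case True
    have "K = - (1/(u s1 - 1))" using True qalt1[OF us1] by (simp add: K_def q1_def)
    moreover have "norm (u s1) = exp (\<bar>Im s0\<bar> * real N)" using True Ims1 by (simp add: normu mult.commute)
    moreover have "exp (\<bar>Im s0\<bar> * real N) > 1" using xs by simp
    ultimately show ?thesis using kb1[of "u s1"] by (simp add: norm_minus_cancel)
  next
    case False
    hence pos: "Im s0 > 0" using assms(7) by simp
    have "K = - (u s1/(u s1 - 1))" using False qalt2[OF us1] by (simp add: K_def q1_def)
    moreover have "norm (u s1) = exp (- (\<bar>Im s0\<bar> * real N))" using pos Ims1 by (simp add: normu mult.commute)
    moreover have "exp (- (\<bar>Im s0\<bar> * real N)) < 1" using xs by simp
    ultimately show ?thesis using kb2[of "u s1"] expconv[OF xs] by (simp add: norm_minus_cancel)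
  qed
  have "norm (trap_err f N) \<le> norm Am + norm Ap + norm (2*pi*\<i> * rr * K)"
    unfolding E using norm_triangle_ineq[of "Am - Ap" "2*pi*\<i> * rr * K"] norm_triangle_ineq4[of Am Ap] by linarith
  also have "norm (2*pi*\<i> * rr * K) = 2*pi*norm rr * norm K" by (simp add: norm_mult)
  also have "2*pi*norm rr * norm K \<le> 2*pi*norm rr * (1 / (exp (\<bar>Im s0\<bar> * real N) - 1))"
    by (intro mult_left_mono bK) auto
  finally have "norm (trap_err f N) \<le> B * (2*pi) + B * (2*pi) + 2*pi*norm rr * (1 / (exp (\<bar>Im s0\<bar> * real N) - 1))"
    using bAm bAp by linarith
  thus ?thesis by (simp add: B_def rr_def field_simps)
qed

end
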